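(* Let $B$ be an irreducible $n\times n$ $\mathrm{SDDM}_0$-matrix whose upper-triangular part contains exactly $n-1+j$ non-zero off-diagonal entries (so $B$ has $2(n-1+j)$ non-zero off-diagonal entries), and let $A_1$ (of dimension $n_1$) be obtained from $B$ by the elimination process described in the context. Then: (a) if $n_1\ge1$, $A_1$ is an irreducible $\mathrm{SDDM}_0$-matrix, and $A_1$ is singular if and only if $B$ is singular; (b) if the graph of non-zero entries of $B$ is planar, then so is that of $A_1$; (c) if $n_1\ge1$, then $n_1\le 2j-2$ and $A_1$ has at most $2(3j-3)$ non-zero off-diagonal entries.
   Context: A matrix is $\mathrm{SDDM}_0$ if it is real, symmetric, weakly diagonally dominant and has non-positive off-diagonal entries; irreducible means its graph of non-zero entries is connected, where the graph of non-zero entries of a symmetric matrix $M$ has vertex set the indices and an edge $\{i,j\}$ ($i\neq j$) iff $M_{ij}\neq0$. Elimination process: starting with the current matrix $M=B$, as long as some index $i$ has at most two non-zero off-diagonal entries in its row of $M$, eliminate it: if $M$ has dimension at least $2$, replace $M$ by the Schur complement of $M$ with respect to the diagonal entry $M_{ii}$ (i.e. remove row and column $i$ and subtract $M_{\cdot i}M_{i\cdot}/M_{ii}$ from the rest); if $M$ has dimension $1$, delete it (leaving an empty matrix, $n_1=0$). The process stops when every row of $M$ has at least three non-zero off-diagonal entries; $A_1$ is the final matrix. *)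

theory Defs
  imports "HOL-Analysis.Analysis" "Jordan_Normal_Form.Determinant"
begin

definition sddm0 :: "real mat \<Rightarrow> bool" where
  "sddm0 M \<longleftrightarrow> dim_row M = dim_col M \<and>
     (\<forall>i < dim_row M. \<forall>k < dim_row M. M $$ (i,k) = M $$ (k,i)) \<and>
     (\<forall>i < dim_row M. (\<Sum>k \<in> {0..<dim_row M} - {i}. \<bar>M $$ (i,k)\<bar>) \<le> M $$ (i,i)) \<and>
     (\<forall>i < dim_row M. \<forall>k < dim_row M. i \<noteq> k \<longrightarrow> M $$ (i,k) \<le> 0)"

definition nz_adj :: "real mat \<Rightarrow> nat \<Rightarrow> nat \<Rightarrow> bool" where
  "nz_adj M i k \<longleftrightarrow> i < dim_row M \<and> k < dim_row M \<and> i \<noteq> k \<and> M $$ (i,k) \<noteq> 0"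

definition nz_edges :: "real mat \<Rightarrow> nat set set" where
  "nz_edges M = {{i,k} | i k. nz_adj M i k}"

definition irreducible_mat :: "real mat \<Rightarrow> bool" where
  "irreducible_mat M \<longleftrightarrow> (\<forall>i < dim_row M. \<forall>k < dim_row M. (nz_adj M)\<^sup>*\<^sup>* i k)"

definition row_nz :: "real mat \<Rightarrow> nat \<Rightarrow> nat" where
  "row_nz M i = card {k. k < dim_row M \<and> k \<noteq> i \<and> M $$ (i,k) \<noteq> 0}"

definition offdiag_nz :: "real mat \<Rightarrow> nat" where
  "offdiag_nz M = card {(i,k). i < dim_row M \<and> k < dim_row M \<and> i \<noteq> k \<and> M $$ (i,k) \<noteq> 0}"

definition upper_nz :: "real mat \<Rightarrow> nat" where
  "upper_nz M = card {(i,k). i < k \<and> k < dim_row M \<and> M $$ (i,k) \<noteq> 0}"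

definition skip :: "nat \<Rightarrow> nat \<Rightarrow> nat" where
  "skip i a = (if a < i then a else Suc a)"

text \<open>Schur complement with respect to the diagonal entry (i,i): remove row and
  column i and subtract M(.,i) M(i,.) / M(i,i).\<close>
definition schur_elim :: "real mat \<Rightarrow> nat \<Rightarrow> real mat" where
  "schur_elim M i = mat (dim_row M - 1) (dim_row M - 1)
     (\<lambda>(a,b). M $$ (skip i a, skip i b) - M $$ (skip i a, i) * M $$ (i, skip i b) / M $$ (i,i))"

definition elim_step :: "real mat \<Rightarrow> real mat \<Rightarrow> bool" where
  "elim_step M M' \<longleftrightarrow> (\<exists>i < dim_row M. row_nz M i \<le> 2 \<and>
     (if dim_row M \<ge> 2 then M' = schur_elim M i else M' = mat 0 0 (\<lambda>_. 0)))"

definition elim_final :: "real mat \<Rightarrow> bool" where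
  "elim_final M \<longleftrightarrow> (\<forall>i < dim_row M. row_nz M i \<ge> 3)"

definition singular_mat :: "real mat \<Rightarrow> bool" where
  "singular_mat M \<longleftrightarrow> det M = 0"

definition planar :: "nat set \<Rightarrow> nat set set \<Rightarrow> bool" where
  "planar V E \<longleftrightarrow> (\<exists>(p :: nat \<Rightarrow> complex) (\<gamma> :: nat set \<Rightarrow> real \<Rightarrow> complex).
     inj_on p V \<and>
     (\<forall>e \<in> E. \<exists>u v. u \<in> V \<and> v \<in> V \<and> u \<noteq> v \<and> e = {u,v} \<and> arc (\<gamma> e) \<and>
        pathstart (\<gamma> e) = p u \<and> pathfinish (\<gamma> e) = p v \<and>
        path_image (\<gamma> e) \<inter> p ` V = {p u, p v}) \<and>
     (\<forall>e \<in> E. \<forall>e' \<in> E. e \<noteq> e' \<longrightarrow> path_image (\<gamma> e) \<inter> path_image (\<gamma> e') \<subseteq> p ` (e \<inter> e')))"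

definition nz_planar :: "real mat \<Rightarrow> bool" where
  "nz_planar M \<longleftrightarrow> planar {0..<dim_row M} (nz_edges M)"

end

theory Submission
  imports Defs
begin

definition unskip :: "nat \<Rightarrow> nat \<Rightarrow> nat" where
  "unskip i x = (if x < i then x else x - 1)"

lemma skip_neq[simp]: "skip i a \<noteq> i" by (simp add: skip_def)
lemma skip_neq2[simp]: "i \<noteq> skip i a" by (simp add: skip_def)
lemma skip_lt: "a < m - 1 \<Longrightarrow> i < m \<Longrightarrow> skip i a < m" by (auto simp: skip_def)
lemma unskip_skip[simp]: "unskip i (skip i a) = a" by (auto simp: skip_def unskip_def)
lemma skip_unskip[simp]: "x \<noteq> i \<Longrightarrow> skip i (unskip i x) = x" by (auto simp: skip_def unskip_def)
lemma unskip_lt: "x < m \<Longrightarrow> x \<noteq> i \<Longrightarrow> i < m \<Longrightarrow> unskip i x < m - 1" by (auto simp: unskip_def)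
lemma skip_inj[simp]: "skip i a = skip i b \<longleftrightarrow> a = b"
  by (metis unskip_skip)
lemma inj_skip: "inj (skip i)" by (auto intro: injI)
lemma skip_image: assumes "i < m" shows "skip i ` {0..<m-1} = {0..<m} - {i}"
proof
  show "skip i ` {0..<m-1} \<subseteq> {0..<m} - {i}" using assms skip_lt by auto
  show "{0..<m} - {i} \<subseteq> skip i ` {0..<m-1}"
  proof
    fix x assume "x \<in> {0..<m} - {i}"
    then have "x = skip i (unskip i x)" "unskip i x \<in> {0..<m-1}" using unskip_lt assms by auto
    then show "x \<in> skip i ` {0..<m-1}" by blast
  qed
qed

lemma schur_dim: "dim_row (schur_elim M i) = dim_row M - 1" "dim_col (schur_elim M i) = dim_row M - 1"
  by (auto simp: schur_elim_def)

lemma schur_idx: "a < dim_row M - 1 \<Longrightarrow> b < dim_row M - 1 \<Longrightarrow>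
  schur_elim M i $$ (a,b) = M $$ (skip i a, skip i b) - M $$ (skip i a, i) * M $$ (i, skip i b) / M $$ (i,i)"
  by (simp add: schur_elim_def)

lemma upper_eq_edges: assumes car: "M \<in> carrier_mat m m"
    and sym: "\<forall>x<m. \<forall>y<m. M $$ (x,y) = M $$ (y,x)"
  shows "upper_nz M = card (nz_edges M)"
proof -
  define U where "U = {(a,b). a < b \<and> b < dim_row M \<and> M $$ (a,b) \<noteq> 0}"
  have dm: "dim_row M = m" using car by simp
  have eq: "nz_edges M = (\<lambda>(a,b). {a,b}) ` U"
  proof
    show "nz_edges M \<subseteq> (\<lambda>(a,b). {a,b}) ` U"
    proof
      fix e assume "e \<in> nz_edges M"
      then obtain a b where e: "e = {a,b}" "nz_adj M a b" by (auto simp: nz_edges_def)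
      then have ab: "a < m" "b < m" "a \<noteq> b" "M $$ (a,b) \<noteq> 0" using dm by (auto simp: nz_adj_def)
      show "e \<in> (\<lambda>(a,b). {a,b}) ` U"
      proof (cases "a < b")
        case True
        then have "(a,b) \<in> U" using ab dm by (simp add: U_def)
        then show ?thesis using e by force
      next
        case False
        then have "b < a" using ab by auto
        moreover have "M $$ (b,a) \<noteq> 0" using ab sym by metis
        ultimately have "(b,a) \<in> U" using ab dm by (simp add: U_def)
        then show ?thesis using e by (force simp: insert_commute)
      qed
    qed
    show "(\<lambda>(a,b). {a,b}) ` U \<subseteq> nz_edges M"
    proof
      fix e assume "e \<in> (\<lambda>(a,b). {a,b}) ` U"
      then obtain a b where "e = {a,b}" "(a,b) \<in> U" by auto
      then have "e = {a,b}" "nz_adj M a b" by (auto simp: U_def nz_adj_def)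
      then show "e \<in> nz_edges M" unfolding nz_edges_def by blast
    qed
  qed
  have inj: "inj_on (\<lambda>(a,b). {a,b}) U" by (auto simp: inj_on_def U_def doubleton_eq_iff)
  show ?thesis unfolding upper_nz_def U_def[symmetric] eq card_image[OF inj] ..
qed

lemma conjs8: assumes "A1 \<and> A2 \<and> A3 \<and> A4 \<and> A5 \<and> A6 \<and> A7 \<and> A8"
  shows A1 A2 A3 A4 A5 A6 A7 A8 using assms by auto

lemma conjs6: assumes "A1 \<and> A2 \<and> A3 \<and> A4 \<and> A5 \<and> A6"
  shows A1 A2 A3 A4 A5 A6 using assms by auto

lemma imp_trans: "(A \<longrightarrow> B) \<Longrightarrow> (B \<longrightarrow> C) \<Longrightarrow> (A \<longrightarrow> C)" by blast

locale stp =
  fixes M :: "real mat" and m i :: nat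
  assumes car: "M \<in> carrier_mat m m" and m2: "m \<ge> 2" and sd: "sddm0 M"
    and irr: "irreducible_mat M" and il: "i < m" and deg: "row_nz M i \<le> 2"
begin

lemma dimM[simp]: "dim_row M = m" "dim_col M = m" using car by auto

lemma sd_parts: "\<forall>x<m. \<forall>y<m. M $$ (x,y) = M $$ (y,x)"
  "\<forall>x<m. (\<Sum>k \<in> {0..<m} - {x}. \<bar>M $$ (x,k)\<bar>) \<le> M $$ (x,x)"
  "\<forall>x<m. \<forall>y<m. x \<noteq> y \<longrightarrow> M $$ (x,y) \<le> 0"
  using sd[unfolded sddm0_def dimM] by blast+

lemma symM: "x < m \<Longrightarrow> y < m \<Longrightarrow> M $$ (x,y) = M $$ (y,x)"
  using sd_parts(1) by blast
lemma offM: "x < m \<Longrightarrow> y < m \<Longrightarrow> x \<noteq> y \<Longrightarrow> M $$ (x,y) \<le> 0"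
  using sd_parts(3) by blast
lemma ddM: "x < m \<Longrightarrow> (\<Sum>k \<in> {0..<m} - {x}. \<bar>M $$ (x,k)\<bar>) \<le> M $$ (x,x)"
  using sd_parts(2) by blast

lemma has_nb: "x < m \<Longrightarrow> \<exists>y<m. y \<noteq> x \<and> M $$ (x,y) \<noteq> 0"
proof -
  assume x: "x < m"
  obtain k where k: "k < m" "k \<noteq> x"
  proof (cases "x = 0")
    case True then show ?thesis using that[of 1] m2 by auto
  next
    case False then show ?thesis using that[of 0] m2 by auto
  qed
  have "(nz_adj M)\<^sup>*\<^sup>* x k" using irr x k unfolding irreducible_mat_def by auto
  then show ?thesis using k(2)
    by (cases rule: converse_rtranclpE) (auto simp: nz_adj_def)
qed

lemma diag_pos: assumes x: "x < m" shows "M $$ (x,x) > 0"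
proof -
  obtain y where y: "y < m" "y \<noteq> x" "M $$ (x,y) \<noteq> 0" using has_nb x by blast
  have "\<bar>M $$ (x,y)\<bar> \<le> (\<Sum>k \<in> {0..<m} - {x}. \<bar>M $$ (x,k)\<bar>)"
    by (rule member_le_sum) (use y in auto)
  also have "\<dots> \<le> M $$ (x,x)" using ddM x .
  finally show ?thesis using y by auto
qed

definition M' where "M' = schur_elim M i"

lemma dimM'[simp]: "dim_row M' = m - 1" "dim_col M' = m - 1"
  by (auto simp: M'_def schur_dim)

lemma idx: "a < m - 1 \<Longrightarrow> b < m - 1 \<Longrightarrow>
  M' $$ (a,b) = M $$ (skip i a, skip i b) - M $$ (skip i a, i) * M $$ (i, skip i b) / M $$ (i,i)"
  unfolding M'_def by (rule schur_idx) simp_all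

lemma prod_nonneg: "x < m \<Longrightarrow> y < m \<Longrightarrow> x \<noteq> i \<Longrightarrow> y \<noteq> i \<Longrightarrow>
   M $$ (x, i) * M $$ (i, y) / M $$ (i,i) \<ge> 0"
  using offM[of x i] offM[of i y] diag_pos[OF il] il
  by (simp add: mult_nonpos_nonpos)

lemma nz_char: assumes a: "a < m - 1" and b: "b < m - 1" and ab: "a \<noteq> b"
  shows "M' $$ (a,b) \<noteq> 0 \<longleftrightarrow> M $$ (skip i a, skip i b) \<noteq> 0 \<or>
     (M $$ (skip i a, i) \<noteq> 0 \<and> M $$ (i, skip i b) \<noteq> 0)"
proof -
  let ?x = "skip i a" and ?y = "skip i b"
  have xy: "?x < m" "?y < m" "?x \<noteq> ?y" using a b ab il skip_lt by auto
  have 1: "M $$ (?x,?y) \<le> 0" using offM xy by auto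
  have 2: "M $$ (?x, i) \<le> 0" "M $$ (i, ?y) \<le> 0" using offM[OF xy(1) il] offM[OF il xy(2)] by auto
  have d: "M $$ (i,i) > 0" using diag_pos il by auto
  have 3: "M $$ (?x, i) * M $$ (i, ?y) \<ge> 0" using 2 by (simp add: mult_nonpos_nonpos)
  have 4: "M $$ (?x, i) * M $$ (i, ?y) \<noteq> 0 \<longleftrightarrow> (M $$ (?x, i) \<noteq> 0 \<and> M $$ (i, ?y) \<noteq> 0)" by simp
  have 5: "M $$ (?x, i) * M $$ (i, ?y) / M $$ (i,i) \<ge> 0" using 3 d by simp
  have 6: "M $$ (?x, i) * M $$ (i, ?y) / M $$ (i,i) = 0 \<longleftrightarrow> M $$ (?x, i) * M $$ (i, ?y) = 0" using d by simp
  show ?thesis unfolding idx[OF a b] using 1 5 6 4 by linarith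
qed

lemma M'_sym: assumes a: "a < m-1" and b: "b < m-1" shows "M' $$ (a,b) = M' $$ (b,a)"
proof -
  have x: "skip i a < m" "skip i b < m" using a b il skip_lt by auto
  show ?thesis unfolding idx[OF a b] idx[OF b a]
    using symM[OF x] symM[OF x(1) il] symM[OF x(2) il] by (simp add: mult.commute)
qed

lemma M'_off: assumes a: "a < m-1" and b: "b < m-1" and ab: "a \<noteq> b" shows "M' $$ (a,b) \<le> 0"
proof -
  have x: "skip i a < m" "skip i b < m" using a b il skip_lt by auto
  have "M $$ (skip i a, skip i b) \<le> 0" using offM x ab by simp
  moreover have "M $$ (skip i a, i) * M $$ (i, skip i b) / M $$ (i,i) \<ge> 0" using prod_nonneg x by simp
  ultimately show ?thesis unfolding idx[OF a b] by linarith
qed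

lemma ddM': assumes x: "x < m" shows "(\<Sum>k \<in> {0..<m} - {x}. - M $$ (x,k)) \<le> M $$ (x,x)"
proof -
  have "(\<Sum>k \<in> {0..<m} - {x}. - M $$ (x,k)) = (\<Sum>k \<in> {0..<m} - {x}. \<bar>M $$ (x,k)\<bar>)"
    by (rule sum.cong) (use offM x in auto)
  then show ?thesis using ddM x by simp
qed

lemma M'_dd: assumes a: "a < m-1" shows "(\<Sum>k \<in> {0..<m-1} - {a}. \<bar>M' $$ (a,k)\<bar>) \<le> M' $$ (a,a)"
proof -
  define r where "r = skip i a"
  have r: "r < m" "r \<noteq> i" using a il skip_lt r_def by auto
  define S where "S = {0..<m} - {i} - {r}"
  define c where "c = M $$ (r,i)"
  define d where "d = M $$ (i,i)"
  define e where "e = M $$ (r,r)"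
  define X where "X = (\<Sum>s\<in>S. M $$ (r,s))"
  define Y where "Y = (\<Sum>s\<in>S. M $$ (i,s))"
  have d: "d > 0" using diag_pos il d_def by auto
  have c: "c \<le> 0" using offM r il c_def by auto
  have cs: "M $$ (i,r) = c" using symM r il c_def by auto
  have img: "skip i ` ({0..<m-1} - {a}) = S"
    using skip_image[OF il] by (auto simp: S_def r_def image_set_diff[OF inj_skip])
  have "(\<Sum>k \<in> {0..<m-1} - {a}. \<bar>M' $$ (a,k)\<bar>) = (\<Sum>k \<in> {0..<m-1} - {a}. - M $$ (r, skip i k) + c / d * M $$ (i, skip i k))"
  proof (rule sum.cong[OF refl])
    fix k assume k: "k \<in> {0..<m-1} - {a}"
    then have "M' $$ (a,k) \<le> 0" using M'_off a by auto
    then show "\<bar>M' $$ (a,k)\<bar> = - M $$ (r, skip i k) + c / d * M $$ (i, skip i k)"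
      using k a idx[OF a, of k] unfolding r_def c_def d_def by auto
  qed
  also have "\<dots> = (\<Sum>s\<in>S. - M $$ (r,s) + c/d * M $$ (i,s))"
    unfolding img[symmetric] by (subst sum.reindex) (auto intro: inj_on_subset[OF inj_skip])
  also have "\<dots> = -X + c/d*Y" by (simp add: X_def Y_def sum_subtractf sum_distrib_left sum_divide_distrib)
  also have "\<dots> \<le> e - c*c/d"
  proof -
    have fin: "finite S" by (simp add: S_def)
    have Sr: "{0..<m} - {r} = insert i S" "i \<notin> S" using r il by (auto simp: S_def)
    have Si: "{0..<m} - {i} = insert r S" "r \<notin> S" using r il by (auto simp: S_def)
    have "(\<Sum>k \<in> {0..<m} - {r}. - M $$ (r,k)) \<le> e" using ddM' r e_def by auto
    moreover have "(\<Sum>k \<in> {0..<m} - {r}. - M $$ (r,k)) = -c - X"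
      unfolding Sr(1) using fin Sr(2) by (simp add: sum_negf X_def c_def)
    moreover have "(\<Sum>k \<in> {0..<m} - {i}. - M $$ (i,k)) \<le> d" using ddM' il d_def by auto
    moreover have "(\<Sum>k \<in> {0..<m} - {i}. - M $$ (i,k)) = -c - Y"
      unfolding Si(1) using fin Si(2) cs by (simp add: sum_negf Y_def)
    ultimately have 1: "-c - X \<le> e" "-c - Y \<le> d" by auto
    have "c/d \<le> 0" using c d by (simp add: divide_nonpos_pos)
    then have "c/d*Y \<le> c/d*(-c-d)" using 1 by (intro mult_left_mono_neg) auto
    also have "c/d*(-c-d) = -c*c/d - c" using d by (simp add: field_simps)
    finally show ?thesis using 1 by linarith
  qed
  also have "e - c*c/d = M' $$ (a,a)" unfolding idx[OF a a] using cs by (simp add: r_def c_def d_def e_def)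
  finally show ?thesis .
qed

lemma sddm0_M': "sddm0 M'"
  unfolding sddm0_def dimM'
proof (intro conjI allI impI)
  show "\<And>a b. a < m - 1 \<Longrightarrow> b < m - 1 \<Longrightarrow> M' $$ (a, b) = M' $$ (b, a)" by (rule M'_sym)
  show "\<And>a. a < m - 1 \<Longrightarrow> (\<Sum>k\<in>{0..<m - 1} - {a}. \<bar>M' $$ (a, k)\<bar>) \<le> M' $$ (a, a)" by (rule M'_dd)
  show "\<And>a b. a < m - 1 \<Longrightarrow> b < m - 1 \<Longrightarrow> a \<noteq> b \<Longrightarrow> M' $$ (a, b) \<le> 0" by (rule M'_off)
qed simp

definition SR where "SR x y \<longleftrightarrow> x < m \<and> y < m \<and> x \<noteq> i \<and> y \<noteq> i \<and> x \<noteq> y \<and>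
   (M $$ (x,y) \<noteq> 0 \<or> (M $$ (x,i) \<noteq> 0 \<and> M $$ (i,y) \<noteq> 0))"

lemma SR_adj: assumes "SR x y" shows "nz_adj M' (unskip i x) (unskip i y)"
proof -
  have xy: "x < m" "y < m" "x \<noteq> i" "y \<noteq> i" "x \<noteq> y" using assms SR_def by auto
  define a where "a = unskip i x"
  define b where "b = unskip i y"
  have ab: "a < m - 1" "b < m - 1" using unskip_lt xy il a_def b_def by auto
  have sk: "skip i a = x" "skip i b = y" using xy a_def b_def by auto
  have "a \<noteq> b" using sk xy by auto
  then show ?thesis using nz_char[OF ab] sk assms ab unfolding nz_adj_def SR_def a_def[symmetric] b_def[symmetric]
    by auto
qed

lemma rtranclp_map_fun: "R\<^sup>*\<^sup>* x y \<Longrightarrow> (\<And>x y. R x y \<Longrightarrow> Q (f x) (f y)) \<Longrightarrow> Q\<^sup>*\<^sup>* (f x) (f y)"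
  by (induction rule: rtranclp_induct) (auto intro: rtranclp.rtrancl_into_rtrancl)

lemma path_SR: assumes p: "(nz_adj M)\<^sup>*\<^sup>* r k" and r: "r < m" "r \<noteq> i"
  shows "(k \<noteq> i \<longrightarrow> SR\<^sup>*\<^sup>* r k) \<and> (k = i \<longrightarrow> (\<exists>x. SR\<^sup>*\<^sup>* r x \<and> x \<noteq> i \<and> x < m \<and> M $$ (x,i) \<noteq> 0))"
  using p
proof (induction rule: rtranclp_induct)
  case base
  then show ?case using r by auto
next
  case (step k k')
  have kk: "k < m" "k' < m" "k \<noteq> k'" "M $$ (k,k') \<noteq> 0" using step.hyps(2) by (auto simp: nz_adj_def)
  show ?case
  proof (cases "k = i")
    case True
    then obtain x where x: "SR\<^sup>*\<^sup>* r x" "x \<noteq> i" "x < m" "M $$ (x,i) \<noteq> 0" using step.IH by auto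
    have "k' \<noteq> i" using kk True by auto
    moreover have "SR\<^sup>*\<^sup>* r k'"
    proof (cases "x = k'")
      case True then show ?thesis using x by simp
    next
      case False
      have "SR x k'" using x kk \<open>k = i\<close> \<open>k' \<noteq> i\<close> False unfolding SR_def by auto
      then show ?thesis by (rule rtranclp.rtrancl_into_rtrancl[OF x(1)])
    qed
    ultimately show ?thesis by auto
  next
    case False
    then have IH: "SR\<^sup>*\<^sup>* r k" using step.IH by auto
    show ?thesis
    proof (cases "k' = i")
      case True
      then show ?thesis using IH False kk by auto
    next
      case False
      then have "SR k k'" using kk \<open>k \<noteq> i\<close> unfolding SR_def by auto
      then show ?thesis using IH False by (auto intro: rtranclp.rtrancl_into_rtrancl)
    qed
  qed
qed

lemma irr_M': "irreducible_mat M'"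
  unfolding irreducible_mat_def
proof (intro allI impI)
  fix a b assume a: "a < dim_row M'" and b: "b < dim_row M'"
  then have ab: "a < m - 1" "b < m - 1" by auto
  have x: "skip i a < m" "skip i b < m" using ab il skip_lt by auto
  have "(nz_adj M)\<^sup>*\<^sup>* (skip i a) (skip i b)" using irr x unfolding irreducible_mat_def by auto
  then have "SR\<^sup>*\<^sup>* (skip i a) (skip i b)" using path_SR x by auto
  then have "(nz_adj M')\<^sup>*\<^sup>* (unskip i (skip i a)) (unskip i (skip i b))"
    by (rule rtranclp_map_fun) (rule SR_adj)
  then show "(nz_adj M')\<^sup>*\<^sup>* a b" by simp
qed

lemma det_schur: "det M = M $$ (i,i) * det M'"
proof -
  define c where "c r = M $$ (r,i) / M $$ (i,i)" for r
  define N where "N k = mat m m (\<lambda>(r,s). if r < k \<and> r \<noteq> i then M $$ (r,s) - c r * M $$ (i,s) else M $$ (r,s))" for k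
  have N0: "N 0 = M" by (rule eq_matI) (auto simp: N_def)
  have Nc: "N k \<in> carrier_mat m m" for k by (simp add: N_def)
  have step: "det (N (Suc k)) = det (N k)" for k
  proof (cases "k < m \<and> k \<noteq> i")
    case True
    have "N (Suc k) = addrow (- c k) k i (N k)"
      by (rule eq_matI) (use True il in \<open>auto simp: N_def mat_addrow_def\<close>)
    then show ?thesis using det_addrow[OF il _ Nc[of k]] True by auto
  next
    case False
    have "N (Suc k) = N k" by (rule eq_matI) (use False in \<open>auto simp: N_def\<close>)
    then show ?thesis by simp
  qed
  have detN: "det (N k) = det M" for k by (induction k) (auto simp: step N0)
  have d0: "M $$ (i,i) \<noteq> 0" using diag_pos[OF il] by simp
  have "det (N m) = (\<Sum>r<m. N m $$ (r,i) * cofactor (N m) r i)"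
    by (rule laplace_expansion_column[OF Nc il])
  also have "\<dots> = N m $$ (i,i) * cofactor (N m) i i"
  proof -
    have "(\<Sum>r<m. N m $$ (r,i) * cofactor (N m) r i) = N m $$ (i,i) * cofactor (N m) i i +
       (\<Sum>r\<in>{..<m} - {i}. N m $$ (r,i) * cofactor (N m) r i)"
      by (rule sum.remove) (use il in auto)
    moreover have "(\<Sum>r\<in>{..<m} - {i}. N m $$ (r,i) * cofactor (N m) r i) = 0"
    proof (rule sum.neutral, rule ballI)
      fix r assume r: "r \<in> {..<m} - {i}"
      have "N m $$ (r,i) = M $$ (r,i) - M $$ (r,i) / M $$ (i,i) * M $$ (i,i)"
        using r il by (simp add: N_def c_def)
      also have "\<dots> = 0" using d0 by simp
      finally show "N m $$ (r,i) * cofactor (N m) r i = 0" by simp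
    qed
    ultimately show ?thesis by simp
  qed
  also have "N m $$ (i,i) = M $$ (i,i)" using il by (simp add: N_def)
  also have "cofactor (N m) i i = det (mat_delete (N m) i i)"
  proof -
    have "(-1::real)^(i+i) = 1" by (simp add: mult_2[symmetric] power_mult)
    then show ?thesis by (simp add: cofactor_def)
  qed
  also have "mat_delete (N m) i i = M'"
  proof (rule eq_matI)
    fix a b assume a: "a < dim_row M'" and b: "b < dim_col M'"
    then have ab: "a < m - 1" "b < m - 1" by auto
    have x: "skip i a < m" "skip i b < m" using ab il skip_lt by auto
    have "mat_delete (N m) i i $$ (a,b) = N m $$ (skip i a, skip i b)"
      using ab by (simp add: mat_delete_def skip_def N_def)
    also have "\<dots> = M' $$ (a,b)" using x unfolding idx[OF ab] by (simp add: N_def c_def)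
    finally show "mat_delete (N m) i i $$ (a,b) = M' $$ (a,b)" .
  qed (auto simp: mat_delete_def N_def)
  finally show ?thesis using detN by simp
qed

lemma sing_M': "det M' = 0 \<longleftrightarrow> det M = 0"
  using det_schur diag_pos[OF il] by auto

definition Ni where "Ni = {k. k < m \<and> k \<noteq> i \<and> M $$ (i,k) \<noteq> 0}"

lemma Ni_fin: "finite Ni" by (simp add: Ni_def)
lemma Ni_card: "card Ni \<le> 2" "card Ni \<ge> 1"
proof -
  show "card Ni \<le> 2" using deg by (simp add: row_nz_def Ni_def)
  obtain y where "y<m" "y \<noteq> i" "M $$ (i,y) \<noteq> 0" using has_nb il by blast
  then have "y \<in> Ni" by (simp add: Ni_def)
  then show "card Ni \<ge> 1" using Ni_fin by (metis One_nat_def Suc_leI card_gt_0_iff empty_iff)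
qed

lemma E'_cases: assumes e: "e' \<in> nz_edges M'"
  shows "(skip i ` e' \<in> nz_edges M \<and> i \<notin> skip i ` e') \<or> (skip i ` e' = Ni \<and> card Ni = 2)"
proof -
  obtain a b where ab: "e' = {a,b}" "nz_adj M' a b" using e by (auto simp: nz_edges_def)
  then have ab': "a < m - 1" "b < m - 1" "a \<noteq> b" "M' $$ (a,b) \<noteq> 0" by (auto simp: nz_adj_def)
  define x where "x = skip i a"
  define y where "y = skip i b"
  have xy: "x < m" "y < m" "x \<noteq> y" "x \<noteq> i" "y \<noteq> i" using ab' il skip_lt x_def y_def by auto
  have im: "skip i ` e' = {x,y}" using ab x_def y_def by auto
  have "M $$ (x, y) \<noteq> 0 \<or> (M $$ (x, i) \<noteq> 0 \<and> M $$ (i, y) \<noteq> 0)"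
    using nz_char[OF ab'(1,2,3)] ab'(4) x_def y_def by auto
  then show ?thesis
  proof
    assume "M $$ (x, y) \<noteq> 0"
    then have "nz_adj M x y" using xy by (simp add: nz_adj_def)
    then have "{x,y} \<in> nz_edges M" by (auto simp: nz_edges_def)
    then show ?thesis using im xy by auto
  next
    assume h: "M $$ (x, i) \<noteq> 0 \<and> M $$ (i, y) \<noteq> 0"
    then have "x \<in> Ni" "y \<in> Ni" using xy symM[OF xy(1) il] by (auto simp: Ni_def)
    then have sub: "{x,y} \<subseteq> Ni" by auto
    have c2: "card {x,y} = 2" using xy by auto
    have "{x,y} = Ni" by (rule card_seteq[OF Ni_fin sub]) (use c2 Ni_card in auto)
    then show ?thesis using im c2 by auto
  qed
qed

lemma E_fin: "finite (nz_edges M)"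
proof -
  have "nz_edges M \<subseteq> Pow {0..<m}" by (auto simp: nz_edges_def nz_adj_def)
  then show ?thesis by (rule finite_subset) simp
qed

lemma edge_count: "card (nz_edges M') + 1 \<le> card (nz_edges M)"
proof -
  define E where "E = nz_edges M"
  define Star where "Star = {e \<in> E. i \<in> e}"
  define X where "X = (if card Ni = 2 then {Ni} else {})"
  have Star_eq: "Star = (\<lambda>k. {i,k}) ` Ni"
  proof
    show "Star \<subseteq> (\<lambda>k. {i,k}) ` Ni"
    proof
      fix e assume "e \<in> Star"
      then obtain x y where e: "e = {x,y}" "nz_adj M x y" "i \<in> e"
        by (auto simp: Star_def E_def nz_edges_def)
      then have xy: "x < m" "y < m" "x \<noteq> y" "M $$ (x,y) \<noteq> 0" by (auto simp: nz_adj_def)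
      show "e \<in> (\<lambda>k. {i,k}) ` Ni"
      proof (cases "x = i")
        case True
        then show ?thesis using e xy by (auto simp: Ni_def)
      next
        case False
        then have "y = i" using e by auto
        then have "x \<in> Ni" using xy False symM[OF xy(1,2)] by (auto simp: Ni_def)
        then show ?thesis using e \<open>y = i\<close> by auto
      qed
    qed
    show "(\<lambda>k. {i,k}) ` Ni \<subseteq> Star"
    proof
      fix e assume "e \<in> (\<lambda>k. {i,k}) ` Ni"
      then obtain k where k: "e = {i,k}" "k \<in> Ni" by auto
      then have "nz_adj M i k" using il by (auto simp: Ni_def nz_adj_def)
      then show "e \<in> Star" using k by (auto simp: Star_def E_def nz_edges_def)
    qed
  qed
  have inj: "inj_on (\<lambda>k. {i,k}) Ni" by (rule inj_onI) (auto simp: Ni_def doubleton_eq_iff)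
  have cStar: "card Star = card Ni" using Star_eq card_image[OF inj] by simp
  have finE: "finite E" using E_fin E_def by simp
  have StarE: "Star \<subseteq> E" by (auto simp: Star_def)
  have cD: "card (E - Star) = card E - card Ni" using card_Diff_subset[OF finite_subset[OF StarE finE] StarE] cStar by simp
  have cSE: "card Ni \<le> card E" using card_mono[OF finE StarE] cStar by simp
  have sub: "nz_edges M' \<subseteq> (\<lambda>e. unskip i ` e) ` ((E - Star) \<union> X)"
  proof
    fix e' assume e': "e' \<in> nz_edges M'"
    have "e' = (\<lambda>e. unskip i ` e) (skip i ` e')" by (simp add: image_image)
    moreover have "skip i ` e' \<in> (E - Star) \<union> X"
      using E'_cases[OF e'] by (auto simp: E_def Star_def X_def)
    ultimately show "e' \<in> (\<lambda>e. unskip i ` e) ` ((E - Star) \<union> X)" by blast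
  qed
  have finU: "finite ((E - Star) \<union> X)" using finE by (simp add: X_def)
  have "card (nz_edges M') \<le> card ((\<lambda>e. unskip i ` e) ` ((E - Star) \<union> X))"
    by (rule card_mono[OF finite_imageI[OF finU] sub])
  also have "\<dots> \<le> card ((E - Star) \<union> X)" by (rule card_image_le[OF finU])
  also have "\<dots> \<le> card (E - Star) + card X" by (rule card_Un_le)
  finally have "card (nz_edges M') \<le> card E - card Ni + card X" using cD by simp
  moreover have "card X + 1 \<le> card Ni" using Ni_card by (auto simp: X_def)
  ultimately have "card (nz_edges M') + 1 \<le> card E" using cSE by linarith
  then show ?thesis by (simp add: E_def)
qed

lemma planar_M': assumes P: "nz_planar M" shows "nz_planar M'"
proof -
  define V where "V = {0..<m}"
  define E where "E = nz_edges M"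
  define Good where "Good p \<gamma> e u v \<longleftrightarrow> (u \<in> V \<and> v \<in> V \<and> u \<noteq> v \<and> e = {u,v} \<and> arc (\<gamma> e) \<and>
        pathstart (\<gamma> e) = p u \<and> pathfinish (\<gamma> e) = p v \<and>
        path_image (\<gamma> e) \<inter> p ` V = {p u, p v})" for p :: "nat \<Rightarrow> complex" and \<gamma> :: "nat set \<Rightarrow> real \<Rightarrow> complex" and e u v
  have ex: "\<exists>(p :: nat \<Rightarrow> complex) (\<gamma> :: nat set \<Rightarrow> real \<Rightarrow> complex). inj_on p V \<and>
     (\<forall>e\<in>E. \<exists>u v. Good p \<gamma> e u v) \<and>
     (\<forall>e\<in>E. \<forall>e'\<in>E. e \<noteq> e' \<longrightarrow> path_image (\<gamma> e) \<inter> path_image (\<gamma> e') \<subseteq> p ` (e \<inter> e'))"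
    using P unfolding nz_planar_def planar_def dimM Good_def V_def[symmetric] E_def[symmetric] by assumption
  then obtain p :: "nat \<Rightarrow> complex" and \<gamma> :: "nat set \<Rightarrow> real \<Rightarrow> complex" where pg: "inj_on p V \<and>
     (\<forall>e\<in>E. \<exists>u v. Good p \<gamma> e u v) \<and>
     (\<forall>e\<in>E. \<forall>e'\<in>E. e \<noteq> e' \<longrightarrow> path_image (\<gamma> e) \<inter> path_image (\<gamma> e') \<subseteq> p ` (e \<inter> e'))"
    by (elim exE) (erule that)
  note inj = conjunct1[OF pg]
  note arcs0 = conjunct1[OF conjunct2[OF pg]]
  note cross = conjunct2[OF conjunct2[OF pg]]
  have arcs: "\<exists>u v. u \<in> V \<and> v \<in> V \<and> u \<noteq> v \<and> e = {u,v} \<and> arc (\<gamma> e) \<and>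
        pathstart (\<gamma> e) = p u \<and> pathfinish (\<gamma> e) = p v \<and>
        path_image (\<gamma> e) \<inter> p ` V = {p u, p v}" if eE: "e \<in> E" for e
  proof -
    have "\<exists>u v. Good p \<gamma> e u v" using arcs0 eE by (rule bspec)
    then obtain u v where "Good p \<gamma> e u v" by (elim exE) (erule that)
    then show ?thesis unfolding Good_def by (intro exI)
  qed
  have imgV: "path_image (\<gamma> e) \<inter> p ` V = p ` e" if eE: "e \<in> E" for e
  proof -
    have "\<exists>u v. Good p \<gamma> e u v" using arcs0 eE by (rule bspec)
    then obtain u v where G: "Good p \<gamma> e u v" by (elim exE) (erule that)
    have h1: "e = {u,v}" using G unfolding Good_def by (elim conjE) assumption
    have h2: "path_image (\<gamma> e) \<inter> p ` V = {p u, p v}" using G unfolding Good_def by (elim conjE) assumption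
    note h = h1 h2
    have "p ` e = {p u, p v}" using h(1) by simp
    then show ?thesis using h(2) by simp
  qed
  define orient where "orient e u = (if pathstart (\<gamma> e) = p u then \<gamma> e else reversepath (\<gamma> e))" for e u
  have orient: "arc (orient e u) \<and> pathstart (orient e u) = p u \<and> pathfinish (orient e u) = p w \<and>
      path_image (orient e u) = path_image (\<gamma> e)"
    if e: "e \<in> E" "e = {u,w}" "u \<noteq> w" for e u w
  proof -
    have "\<exists>u v. Good p \<gamma> e u v" using arcs0 e(1) by (rule bspec)
    then obtain u' v' where G: "Good p \<gamma> e u' v'" by (elim exE) (erule that)
    note uv = conjs8[OF G[unfolded Good_def]]
    have "(u' = u \<and> v' = w) \<or> (u' = w \<and> v' = u)" using uv(4) e(2,3) by (auto simp: doubleton_eq_iff)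
    then show ?thesis
    proof
      assume "u' = u \<and> v' = w"
      then show ?thesis using uv by (simp add: orient_def)
    next
      assume h: "u' = w \<and> v' = u"
      then have "p w \<noteq> p u" using inj uv e(3) by (auto dest: inj_onD)
      then show ?thesis using uv h by (simp add: orient_def arc_reversepath)
    qed
  qed
  have NiE: "{i,k} \<in> E" if "k \<in> Ni" for k
  proof -
    have "nz_adj M i k" using that il by (auto simp: Ni_def nz_adj_def)
    then show ?thesis by (auto simp: E_def nz_edges_def)
  qed
  have NiV: "Ni \<subseteq> V" "i \<notin> Ni" by (auto simp: Ni_def V_def)
  have iV: "i \<in> V" using il by (simp add: V_def)
  define xy where "xy = (SOME q. Ni = {fst q, snd q} \<and> fst q \<noteq> snd q)"
  define x where "x = fst xy"
  define y where "y = snd xy"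
  have xy_prop: "Ni = {x,y} \<and> x \<noteq> y" if "card Ni = 2"
  proof -
    have "\<exists>a b. Ni = {a,b} \<and> a \<noteq> b" using that by (simp only: card_2_iff)
    then obtain a b where "Ni = {a,b}" "a \<noteq> b" by blast
    then have "\<exists>q. Ni = {fst q, snd q} \<and> fst q \<noteq> snd q" by (intro exI[of _ "(a,b)"]) simp
    from someI_ex[OF this] show ?thesis by (simp add: x_def y_def xy_def)
  qed
  define g1 where "g1 = orient {i,x} x"
  define g2 where "g2 = orient {i,y} i"
  define J where "J = g1 +++ g2"
  have Jprops: "arc J \<and> pathstart J = p x \<and> pathfinish J = p y \<and>
      path_image J = path_image (\<gamma> {i,x}) \<union> path_image (\<gamma> {i,y})" if c2: "card Ni = 2"
  proof -
    have xy: "Ni = {x,y}" "x \<noteq> y" using xy_prop c2 by auto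
    have xyi: "x \<noteq> i" "y \<noteq> i" using xy NiV by auto
    have E1: "{i,x} \<in> E" "{i,y} \<in> E" using NiE xy by auto
    have o1: "arc g1" "pathstart g1 = p x" "pathfinish g1 = p i" "path_image g1 = path_image (\<gamma> {i,x})"
      using orient[OF E1(1), of x i] xyi unfolding g1_def by (auto simp: insert_commute)
    have o2: "arc g2" "pathstart g2 = p i" "pathfinish g2 = p y" "path_image g2 = path_image (\<gamma> {i,y})"
      using orient[OF E1(2), of i y] xyi unfolding g2_def by auto
    have ne: "{i,x} \<noteq> {i,y}" using xy xyi by (auto simp: doubleton_eq_iff)
    have "path_image g1 \<inter> path_image g2 \<subseteq> p ` ({i,x} \<inter> {i,y})"
      unfolding o1(4) o2(4) by (rule cross[rule_format, OF E1(1) E1(2) ne])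
    also have "{i,x} \<inter> {i,y} = {i}" using xy by auto
    finally have "path_image g1 \<inter> path_image g2 \<subseteq> {pathstart g2}" using o2 by simp
    then have "arc J" unfolding J_def using o1 o2 by (intro arc_join) auto
    then show ?thesis unfolding J_def using o1 o2 path_image_join[of g1 g2] by simp
  qed
  define V' where "V' = {0..<m-1}"
  define p' where "p' = p \<circ> skip i"
  define \<gamma>' where "\<gamma>' e' = (if skip i ` e' \<in> E then \<gamma> (skip i ` e') else J)" for e'
  have skV: "skip i ` V' = V - {i}" using skip_image[OF il] by (simp add: V'_def V_def)
  have pV': "p' ` V' = p ` V - {p i}"
    unfolding p'_def image_comp[symmetric] skV using inj iV by (simp add: inj_on_image_set_diff)
  have unsk: "e' = unskip i ` (skip i ` e')" for e' by (simp add: image_image)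
  have pimg: "p' ` e' = p ` (skip i ` e')" for e' by (simp add: p'_def image_comp)
  have pi_ne: "p u \<noteq> p i" if "u \<in> V" "u \<noteq> i" for u using inj that iV by (auto dest: inj_onD)
  have E'new: "skip i ` e' = Ni \<and> card Ni = 2" if "e' \<in> nz_edges M'" "skip i ` e' \<notin> E" for e'
    using E'_cases[OF that(1)] that(2) E_def by auto
  have cross_new: "path_image J \<inter> path_image (\<gamma> s) \<subseteq> p ` (Ni \<inter> s)"
    if c2: "card Ni = 2" and s: "s \<in> E" "i \<notin> s" for s
  proof -
    have xy: "Ni = {x,y}" "x \<noteq> y" using xy_prop c2 by auto
    have E1: "{i,x} \<in> E" "{i,y} \<in> E" using NiE xy by auto
    have n1: "{i,x} \<noteq> s" "{i,y} \<noteq> s" using s(2) by auto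
    have "path_image (\<gamma> {i,x}) \<inter> path_image (\<gamma> s) \<subseteq> p ` ({i,x} \<inter> s)"
      by (rule cross[rule_format, OF E1(1) s(1) n1(1)])
    moreover have "path_image (\<gamma> {i,y}) \<inter> path_image (\<gamma> s) \<subseteq> p ` ({i,y} \<inter> s)"
      by (rule cross[rule_format, OF E1(2) s(1) n1(2)])
    moreover have "{i,x} \<inter> s \<subseteq> Ni \<inter> s" "{i,y} \<inter> s \<subseteq> Ni \<inter> s" using s xy by auto
    ultimately show ?thesis using Jprops[OF c2] by blast
  qed
  have part1: "inj_on p' V'"
    unfolding p'_def by (rule comp_inj_on) (use inj_on_subset[OF inj_skip] skV inj in \<open>auto intro: inj_on_subset\<close>)
  have part2: "\<exists>u v. u \<in> V' \<and> v \<in> V' \<and> u \<noteq> v \<and> e' = {u,v} \<and> arc (\<gamma>' e') \<and>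
        pathstart (\<gamma>' e') = p' u \<and> pathfinish (\<gamma>' e') = p' v \<and>
        path_image (\<gamma>' e') \<inter> p' ` V' = {p' u, p' v}" if e': "e' \<in> nz_edges M'" for e'
  proof (cases "skip i ` e' \<in> E")
    case True
    have "\<exists>u v. Good p \<gamma> (skip i ` e') u v" using arcs0 True by (rule bspec)
    then obtain u0 v0 where G: "Good p \<gamma> (skip i ` e') u0 v0" by (elim exE) (erule that)
    note uv = conjs8[OF G[unfolded Good_def]]
    have "u0 \<in> skip i ` e'" "v0 \<in> skip i ` e'" using uv(4) by auto
    then have ni: "u0 \<noteq> i" "v0 \<noteq> i" by auto
    show ?thesis
    proof (intro exI conjI)
      show "unskip i u0 \<in> V'" "unskip i v0 \<in> V'" using unskip_lt ni uv il by (auto simp: V_def V'_def)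
      show "unskip i u0 \<noteq> unskip i v0" using ni uv(3) by (metis skip_unskip)
      show "e' = {unskip i u0, unskip i v0}" using unsk[of e'] uv(4) by simp
      show "arc (\<gamma>' e')" using True uv by (simp add: \<gamma>'_def)
      show "pathstart (\<gamma>' e') = p' (unskip i u0)" using True uv ni by (simp add: \<gamma>'_def p'_def)
      show "pathfinish (\<gamma>' e') = p' (unskip i v0)" using True uv ni by (simp add: \<gamma>'_def p'_def)
      have "path_image (\<gamma>' e') \<inter> p' ` V' = (path_image (\<gamma> (skip i ` e')) \<inter> p ` V) - {p i}"
        using True pV' by (auto simp: \<gamma>'_def)
      also have "\<dots> = {p u0, p v0}" using uv(8) pi_ne[OF uv(1) ni(1)] pi_ne[OF uv(2) ni(2)] by auto
      finally show "path_image (\<gamma>' e') \<inter> p' ` V' = {p' (unskip i u0), p' (unskip i v0)}"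
        using ni by (simp add: p'_def)
    qed
  next
    case False
    note new = conjunct1[OF E'new[OF e' False]] conjunct2[OF E'new[OF e' False]]
    have xy: "Ni = {x,y}" "x \<noteq> y" using xy_prop new by auto
    have xyi: "x \<noteq> i" "y \<noteq> i" "x \<in> V" "y \<in> V" using xy NiV by auto
    have E1: "{i,x} \<in> E" "{i,y} \<in> E" using NiE xy by auto
    have g: "\<gamma>' e' = J" using False by (simp add: \<gamma>'_def)
    show ?thesis
    proof (intro exI conjI)
      show "unskip i x \<in> V'" "unskip i y \<in> V'" using unskip_lt xyi il by (auto simp: V_def V'_def)
      show "unskip i x \<noteq> unskip i y" using xyi xy by (metis skip_unskip)
      show "e' = {unskip i x, unskip i y}" using unsk[of e'] new xy by simp
      show "arc (\<gamma>' e')" using Jprops new g by simp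
      show "pathstart (\<gamma>' e') = p' (unskip i x)" using Jprops new g xyi by (simp add: p'_def)
      show "pathfinish (\<gamma>' e') = p' (unskip i y)" using Jprops new g xyi by (simp add: p'_def)
      have "path_image (\<gamma>' e') \<inter> p' ` V' =
          ((path_image (\<gamma> {i,x}) \<inter> p ` V) \<union> (path_image (\<gamma> {i,y}) \<inter> p ` V)) - {p i}"
        using Jprops[OF new(2)] g pV' by auto
      also have "\<dots> = {p x, p y}" using imgV[OF E1(1)] imgV[OF E1(2)] pi_ne[OF xyi(3,1)] pi_ne[OF xyi(4,2)]
        by auto
      finally show "path_image (\<gamma>' e') \<inter> p' ` V' = {p' (unskip i x), p' (unskip i y)}"
        using xyi by (simp add: p'_def)
    qed
  qed
  have part3: "path_image (\<gamma>' e1) \<inter> path_image (\<gamma>' e2) \<subseteq> p' ` (e1 \<inter> e2)"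
    if e: "e1 \<in> nz_edges M'" "e2 \<in> nz_edges M'" "e1 \<noteq> e2" for e1 e2
  proof -
    have ne: "skip i ` e1 \<noteq> skip i ` e2" using e(3) unsk by metis
    have pI: "p' ` (e1 \<inter> e2) = p ` (skip i ` e1 \<inter> skip i ` e2)"
      by (simp add: pimg image_Int[OF inj_skip])
    have ni: "i \<notin> skip i ` e1" "i \<notin> skip i ` e2" by auto
    show ?thesis
    proof (cases "skip i ` e1 \<in> E")
      case T1: True
      show ?thesis
      proof (cases "skip i ` e2 \<in> E")
        case True
        then show ?thesis using T1 cross[rule_format, OF T1 True ne] pI by (simp add: \<gamma>'_def)
      next
        case False
        note new = conjunct1[OF E'new[OF e(2) False]] conjunct2[OF E'new[OF e(2) False]]
        have "path_image J \<inter> path_image (\<gamma> (skip i ` e1)) \<subseteq> p ` (Ni \<inter> skip i ` e1)"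
          by (rule cross_new[OF new(2) T1 ni(1)])
        then show ?thesis using T1 False new pI by (auto simp: \<gamma>'_def)
      qed
    next
      case F1: False
      note new = conjunct1[OF E'new[OF e(1) F1]] conjunct2[OF E'new[OF e(1) F1]]
      show ?thesis
      proof (cases "skip i ` e2 \<in> E")
        case True
        have "path_image J \<inter> path_image (\<gamma> (skip i ` e2)) \<subseteq> p ` (Ni \<inter> skip i ` e2)"
          by (rule cross_new[OF new(2) True ni(2)])
        then show ?thesis using True F1 new pI by (auto simp: \<gamma>'_def)
      next
        case False
        have "skip i ` e2 = Ni" using conjunct1[OF E'new[OF e(2) False]] .
        then show ?thesis using new ne by simp
      qed
    qed
  qed
  show ?thesis unfolding nz_planar_def planar_def dimM' V'_def[symmetric]
    apply (rule exI[of _ p'], rule exI[of _ \<gamma>'])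
    apply (intro conjI ballI impI)
      apply (rule part1)
     apply (erule part2)
    apply (rule part3; assumption)
    done
qed


lemma step_result: "sddm0 (schur_elim M i) \<and> irreducible_mat (schur_elim M i) \<and>
  (det (schur_elim M i) = 0 \<longleftrightarrow> det M = 0) \<and> upper_nz (schur_elim M i) + 1 \<le> upper_nz M \<and>
  (nz_planar M \<longrightarrow> nz_planar (schur_elim M i)) \<and> dim_row (schur_elim M i) = m - 1"
proof -
  have carM': "M' \<in> carrier_mat (m - 1) (m - 1)" by (rule carrier_matI) (rule dimM'(1), rule dimM'(2))
  have symM': "\<forall>x<m - 1. \<forall>y<m - 1. M' $$ (x,y) = M' $$ (y,x)" by (intro allI impI) (rule M'_sym)
  have u1: "upper_nz M = card (nz_edges M)" by (rule upper_eq_edges[OF car sd_parts(1)])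
  have u2: "upper_nz M' = card (nz_edges M')" by (rule upper_eq_edges[OF carM' symM'])
  have "upper_nz M' + 1 \<le> upper_nz M" using edge_count u1 u2 by simp
  then have A: "upper_nz (schur_elim M i) + 1 \<le> upper_nz M" by (simp add: M'_def)
  have B: "sddm0 (schur_elim M i)" using sddm0_M' by (simp add: M'_def)
  have C: "irreducible_mat (schur_elim M i)" using irr_M' by (simp add: M'_def)
  have D: "det (schur_elim M i) = 0 \<longleftrightarrow> det M = 0" using sing_M' by (simp add: M'_def)
  have E: "nz_planar M \<longrightarrow> nz_planar (schur_elim M i)" using planar_M' by (simp add: M'_def)
  have F: "dim_row (schur_elim M i) = m - 1" by (simp add: schur_dim)
  show ?thesis using A B C D E F by (intro conjI)
qed



end

lemma offdiag_eq: assumes car: "M \<in> carrier_mat m m"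
    and sym: "\<forall>x<m. \<forall>y<m. M $$ (x,y) = M $$ (y,x)"
  shows "offdiag_nz M = 2 * upper_nz M"
proof -
  define U where "U = {(a,b). a < b \<and> b < dim_row M \<and> M $$ (a,b) \<noteq> 0}"
  define OD where "OD = {(a,b). a < dim_row M \<and> b < dim_row M \<and> a \<noteq> b \<and> M $$ (a,b) \<noteq> 0}"
  have dm: "dim_row M = m" using car by simp
  have fin: "finite U"
  proof -
    have "U \<subseteq> {0..<m} \<times> {0..<m}" using dm by (auto simp: U_def)
    then show ?thesis by (rule finite_subset) simp
  qed
  have Oeq: "OD = U \<union> prod.swap ` U"
  proof
    show "OD \<subseteq> U \<union> prod.swap ` U"
    proof
      fix q assume "q \<in> OD"
      then obtain a b where q: "q = (a,b)" "a < m" "b < m" "a \<noteq> b" "M $$ (a,b) \<noteq> 0"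
        using dm by (auto simp: OD_def)
      show "q \<in> U \<union> prod.swap ` U"
      proof (cases "a < b")
        case True then show ?thesis using q dm by (simp add: U_def)
      next
        case False
        then have "b < a" using q by auto
        moreover have "M $$ (b,a) \<noteq> 0" using q sym by metis
        ultimately have "(b,a) \<in> U" using q dm by (simp add: U_def)
        then have "prod.swap (b,a) \<in> prod.swap ` U" by (rule imageI)
        then show ?thesis using q by simp
      qed
    qed
    show "U \<union> prod.swap ` U \<subseteq> OD"
    proof
      fix q assume "q \<in> U \<union> prod.swap ` U"
      then show "q \<in> OD"
      proof
        assume "q \<in> U" then show ?thesis by (auto simp: U_def OD_def)
      next
        assume "q \<in> prod.swap ` U"
        then obtain a b where q: "q = (b,a)" "(a,b) \<in> U" by auto
        then have "a < b" "b < m" "M $$ (a,b) \<noteq> 0" using dm by (auto simp: U_def)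
        moreover then have "M $$ (b,a) \<noteq> 0" using sym by (metis less_trans)
        ultimately show ?thesis using q dm by (auto simp: OD_def)
      qed
    qed
  qed
  have disj: "U \<inter> prod.swap ` U = {}" by (auto simp: U_def)
  have "card OD = card U + card (prod.swap ` U)"
    unfolding Oeq by (rule card_Un_disjoint[OF fin finite_imageI[OF fin] disj])
  also have "card (prod.swap ` U) = card U" by (rule card_image, rule inj_on_inverseI[where g = prod.swap]) simp
  finally show ?thesis unfolding offdiag_nz_def upper_nz_def OD_def[symmetric] U_def[symmetric] by simp
qed

lemma offdiag_rows: "offdiag_nz M = (\<Sum>x<dim_row M. row_nz M x)"
proof -
  have eq: "{(i,k). i < dim_row M \<and> k < dim_row M \<and> i \<noteq> k \<and> M $$ (i,k) \<noteq> 0} =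
     Sigma {..<dim_row M} (\<lambda>x. {k. k < dim_row M \<and> k \<noteq> x \<and> M $$ (x,k) \<noteq> 0})" by auto
  show ?thesis unfolding offdiag_nz_def row_nz_def eq by (rule card_SigmaI) auto
qed

lemma planar_empty: "nz_planar (mat 0 0 f)"
proof -
  have "nz_edges (mat 0 0 f) = {}" by (auto simp: nz_edges_def nz_adj_def)
  then show ?thesis unfolding nz_planar_def planar_def by simp
qed

lemma invariant:
  assumes B: "B \<in> carrier_mat n n" "sddm0 B" "irreducible_mat B"
    and st: "elim_step\<^sup>*\<^sup>* B A"
  shows "(dim_row A \<ge> 1 \<longrightarrow> sddm0 A \<and> irreducible_mat A \<and> (det A = 0 \<longleftrightarrow> det B = 0) \<and>
           upper_nz A + n \<le> upper_nz B + dim_row A) \<and> (nz_planar B \<longrightarrow> nz_planar A)"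
  using st
proof (induction rule: rtranclp_induct)
  case base
  then show ?case using B by auto
next
  case (step A A')
  obtain k where k: "k < dim_row A" "row_nz A k \<le> 2"
    and A': "if dim_row A \<ge> 2 then A' = schur_elim A k else A' = mat 0 0 (\<lambda>_. 0)"
    using step.hyps(2) unfolding elim_step_def by blast
  have IH: "sddm0 A" "irreducible_mat A" "det A = 0 \<longleftrightarrow> det B = 0" "upper_nz A + n \<le> upper_nz B + dim_row A"
    "nz_planar B \<longrightarrow> nz_planar A" using step.IH k by auto
  show ?case
  proof (cases "dim_row A \<ge> 2")
    case True
    have "dim_row A = dim_col A" using IH(1) unfolding sddm0_def by (rule conjunct1)
    then have car: "A \<in> carrier_mat (dim_row A) (dim_row A)" unfolding carrier_mat_def by simp
    note R = stp.step_result[OF stp.intro[OF car True IH(1) IH(2) k(1) k(2)]]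
    have A'M: "A' = schur_elim A k" using A' True by simp
    note r = conjs6[OF R]
    have up: "upper_nz (schur_elim A k) + n \<le> upper_nz B + dim_row (schur_elim A k)"
      unfolding r(6) using r(4) IH(4) True by linarith
    have g1: "det (schur_elim A k) = 0 \<longleftrightarrow> det B = 0" using r(3) IH(3) by (rule trans)
    have g2: "nz_planar B \<longrightarrow> nz_planar (schur_elim A k)" using IH(5) r(5) by (rule imp_trans)
    have "dim_row (schur_elim A k) \<ge> 1 \<longrightarrow> sddm0 (schur_elim A k) \<and> irreducible_mat (schur_elim A k) \<and>
      (det (schur_elim A k) = 0 \<longleftrightarrow> det B = 0) \<and> upper_nz (schur_elim A k) + n \<le> upper_nz B + dim_row (schur_elim A k)"
      using r(1) r(2) g1 up by (intro impI conjI)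
    then show ?thesis unfolding A'M using g2 by (rule conjI)
  next
    case False
    then have "A' = mat 0 0 (\<lambda>_. 0)" using A' by simp
    then show ?thesis using planar_empty by simp
  qed
qed

theorem proposition4p1:
  fixes B A1 :: "real mat" and n :: nat and j :: int
  assumes "B \<in> carrier_mat n n"
    and "sddm0 B" and "irreducible_mat B"
    and "int (upper_nz B) = int n - 1 + j"
    and "elim_step\<^sup>*\<^sup>* B A1" and "elim_final A1"
  shows "(dim_row A1 \<ge> 1 \<longrightarrow> sddm0 A1 \<and> irreducible_mat A1 \<and>
            (singular_mat A1 \<longleftrightarrow> singular_mat B))
     \<and> (nz_planar B \<longrightarrow> nz_planar A1)
     \<and> (dim_row A1 \<ge> 1 \<longrightarrow> int (dim_row A1) \<le> 2 * j - 2 \<and>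
            int (offdiag_nz A1) \<le> 2 * (3 * j - 3))"
proof -
  note inv = invariant[OF assms(1,2,3,5)]
  note a1 = conjunct1[OF inv]
  note a2 = conjunct2[OF inv]
  have part3: "int (dim_row A1) \<le> 2 * j - 2 \<and> int (offdiag_nz A1) \<le> 2 * (3 * j - 3)"
    if d: "dim_row A1 \<ge> 1"
  proof -
    note a1d = mp[OF a1 d]
    note sA = conjunct1[OF a1d]
    note up = conjunct2[OF conjunct2[OF conjunct2[OF a1d]]]
    have "dim_row A1 = dim_col A1" using sA unfolding sddm0_def by (rule conjunct1)
    then have car: "A1 \<in> carrier_mat (dim_row A1) (dim_row A1)" unfolding carrier_mat_def by simp
    have sym: "\<forall>x<dim_row A1. \<forall>y<dim_row A1. A1 $$ (x,y) = A1 $$ (y,x)"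
      using sA unfolding sddm0_def by (rule conjunct1[OF conjunct2])
    have o2: "offdiag_nz A1 = 2 * upper_nz A1" by (rule offdiag_eq[OF car sym])
    have "(\<Sum>x<dim_row A1. (3::nat)) \<le> (\<Sum>x<dim_row A1. row_nz A1 x)"
      by (rule sum_mono) (use assms(6) in \<open>simp add: elim_final_def\<close>)
    then have "dim_row A1 * 3 \<le> (\<Sum>x<dim_row A1. row_nz A1 x)" by simp
    then have o3: "3 * dim_row A1 \<le> offdiag_nz A1" using offdiag_rows[of A1] by simp
    have i1: "int (upper_nz A1) \<le> int (dim_row A1) - 1 + j" using up assms(4) by linarith
    have i2: "int (offdiag_nz A1) = 2 * int (upper_nz A1)" using o2 by simp
    have i3: "3 * int (dim_row A1) \<le> int (offdiag_nz A1)" using o3 by linarith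
    have h1: "int (dim_row A1) \<le> 2 * j - 2" using i1 i2 i3 by linarith
    have h2: "int (offdiag_nz A1) \<le> 2 * int (dim_row A1) - 2 + 2 * j" using i1 i2 by linarith
    have h3': "int (offdiag_nz A1) \<le> 6 * j - 6" using h1 h2 by linarith
    have e6: "2 * (3 * j - 3) = 6 * j - 6" by simp
    have h3: "int (offdiag_nz A1) \<le> 2 * (3 * j - 3)" using h3' unfolding e6 .
    show ?thesis using h1 h3 by (rule conjI)
  qed
  show ?thesis unfolding singular_mat_def
  proof (intro conjI impI)
    assume d: "dim_row A1 \<ge> 1"
    note a1d = mp[OF a1 d]
    show "sddm0 A1" by (rule conjunct1[OF a1d])
    show "irreducible_mat A1" by (rule conjunct1[OF conjunct2[OF a1d]])
    show "det A1 = 0 \<longleftrightarrow> det B = 0" by (rule conjunct1[OF conjunct2[OF conjunct2[OF a1d]]])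
  next
    assume "nz_planar B" then show "nz_planar A1" by (rule mp[OF a2])
  next
    assume d: "dim_row A1 \<ge> 1"
    show "int (dim_row A1) \<le> 2 * j - 2" by (rule conjunct1[OF part3[OF d]])
  next
    assume d: "dim_row A1 \<ge> 1"
    show "int (offdiag_nz A1) \<le> 2 * (3 * j - 3)" by (rule conjunct2[OF part3[OF d]])
  qed
qed

end
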